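(* Let $G$ be a connected graph and let $S\subseteq V(G)$. The following statements are equivalent: (1) there is a GS ordering of $G$ whose $\mathcal{F}$-tree has all elements of $S$ as leaves; (2) there is a spanning tree of $G$ in which all elements of $S$ are leaves; (3) the set $V(G)\setminus S$ is a connected dominating set of $G$.
   Context: All graphs are finite, simple, undirected, connected and non-empty. A GS (generic search) ordering of $G$ is an ordering $(v_1,\dots,v_n)$ of $V(G)$ such that every $v_i$ with $i>1$ has a neighbor among $v_1,\dots,v_{i-1}$. Its $\mathcal{F}$-tree is the spanning tree rooted at $v_1$ in which the parent of $v_i$ ($i>1$) is its neighbor appearing leftmost in the ordering. Spanning trees are rooted; a leaf is a non-root vertex without children (the root is never a leaf). A connected dominating set is a set $D\subseteq V(G)$ such that $G[D]$ is connected and every vertex outside $D$ has a neighbor in $D$. *)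

theory Defs
  imports Main
begin

definition simple_graph :: "'a set \<Rightarrow> ('a \<Rightarrow> 'a \<Rightarrow> bool) \<Rightarrow> bool" where
  "simple_graph V E \<longleftrightarrow> finite V \<and> V \<noteq> {} \<and>
     (\<forall>u v. E u v \<longrightarrow> u \<in> V \<and> v \<in> V) \<and>
     (\<forall>u v. E u v \<longrightarrow> E v u) \<and> (\<forall>u. \<not> E u u)"

definition induced_connected :: "('a \<Rightarrow> 'a \<Rightarrow> bool) \<Rightarrow> 'a set \<Rightarrow> bool" where
  "induced_connected E D \<longleftrightarrow> D \<noteq> {} \<and>
     (\<forall>u\<in>D. \<forall>v\<in>D. (\<lambda>x y. E x y \<and> x \<in> D \<and> y \<in> D)\<^sup>*\<^sup>* u v)"

definition connected_graph :: "'a set \<Rightarrow> ('a \<Rightarrow> 'a \<Rightarrow> bool) \<Rightarrow> bool" where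
  "connected_graph V E \<longleftrightarrow> simple_graph V E \<and> induced_connected E V"

definition connected_dominating_set :: "'a set \<Rightarrow> ('a \<Rightarrow> 'a \<Rightarrow> bool) \<Rightarrow> 'a set \<Rightarrow> bool" where
  "connected_dominating_set V E D \<longleftrightarrow> D \<subseteq> V \<and> induced_connected E D \<and>
     (\<forall>v \<in> V - D. \<exists>u \<in> D. E v u)"

text \<open>The tree edges are {v, p v} for v in V - {r}.\<close>
definition rooted_spanning_tree ::
  "'a set \<Rightarrow> ('a \<Rightarrow> 'a \<Rightarrow> bool) \<Rightarrow> 'a \<Rightarrow> ('a \<Rightarrow> 'a) \<Rightarrow> bool" where
  "rooted_spanning_tree V E r p \<longleftrightarrow> r \<in> V \<and>
     (\<forall>v \<in> V - {r}. p v \<in> V \<and> E v (p v)) \<and>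
     (\<forall>v \<in> V. \<exists>k. (p ^^ k) v = r)"

definition tree_leaf :: "'a set \<Rightarrow> 'a \<Rightarrow> ('a \<Rightarrow> 'a) \<Rightarrow> 'a \<Rightarrow> bool" where
  "tree_leaf V r p v \<longleftrightarrow> v \<in> V \<and> v \<noteq> r \<and> \<not> (\<exists>w \<in> V - {r}. p w = v)"

definition gs_ordering :: "'a set \<Rightarrow> ('a \<Rightarrow> 'a \<Rightarrow> bool) \<Rightarrow> 'a list \<Rightarrow> bool" where
  "gs_ordering V E xs \<longleftrightarrow> distinct xs \<and> set xs = V \<and>
     (\<forall>i. 0 < i \<and> i < length xs \<longrightarrow> (\<exists>j < i. E (xs ! i) (xs ! j)))"

definition F_root :: "'a list \<Rightarrow> 'a" where
  "F_root xs = hd xs"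

definition F_parent :: "('a \<Rightarrow> 'a \<Rightarrow> bool) \<Rightarrow> 'a list \<Rightarrow> 'a \<Rightarrow> 'a" where
  "F_parent E xs v = xs ! (LEAST j. j < length xs \<and> E v (xs ! j))"

end

theory Submission
  imports Defs
begin

lemma F_parent_idx:
  assumes "j0 < length xs" "E v (xs!j0)"
  shows "\<exists>l \<le> j0. F_parent E xs v = xs!l \<and> E v (xs!l)"
proof -
  let ?P = "\<lambda>j. j < length xs \<and> E v (xs!j)"
  have 1: "?P (Least ?P)" by (rule LeastI[of ?P j0]) (use assms in auto)
  have 2: "Least ?P \<le> j0" by (rule Least_le) (use assms in auto)
  show ?thesis using 1 2 unfolding F_parent_def by blast
qed

lemma rtranclp_sym:
  assumes "\<And>x y. R x y \<Longrightarrow> R y x" "R\<^sup>*\<^sup>* u v"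
  shows "R\<^sup>*\<^sup>* v u"
  using assms(2)
proof (induction rule: rtranclp_induct)
  case base then show ?case by simp
next
  case (step y z)
  then show ?case using assms(1) by (meson converse_rtranclp_into_rtranclp)
qed

lemma crossing:
  assumes "R\<^sup>*\<^sup>* a b" "a \<in> A" "b \<notin> A"
  shows "\<exists>x y. R x y \<and> x \<in> A \<and> y \<notin> A"
  using assms by (induction rule: rtranclp_induct) auto

lemma gs_exists:
  assumes "finite D" "induced_connected E D" "\<And>x y. E x y \<Longrightarrow> E y x"
  shows "\<exists>xs. distinct xs \<and> set xs = D \<and>
           (\<forall>i. 0<i \<and> i<length xs \<longrightarrow> (\<exists>j<i. E (xs!i) (xs!j)))"
proof -
  obtain r where r: "r \<in> D" using assms(2) unfolding induced_connected_def by blast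
  let ?R = "\<lambda>x y. E x y \<and> x \<in> D \<and> y \<in> D"
  have main: "\<exists>xs. distinct xs \<and> set xs \<subseteq> D \<and> r \<in> set xs \<and> length xs = Suc n \<and>
           (\<forall>i. 0<i \<and> i<length xs \<longrightarrow> (\<exists>j<i. E (xs!i) (xs!j)))"
    if "Suc n \<le> card D" for n
    using that
  proof (induction n)
    case 0
    show ?case by (rule exI[of _ "[r]"]) (use r in auto)
  next
    case (Suc n)
    then obtain xs where xs: "distinct xs" "set xs \<subseteq> D" "r \<in> set xs" "length xs = Suc n"
      "\<forall>i. 0<i \<and> i<length xs \<longrightarrow> (\<exists>j<i. E (xs!i) (xs!j))" by auto
    have "card (set xs) < card D" using xs Suc.prems distinct_card by fastforce
    then obtain v where v: "v \<in> D" "v \<notin> set xs" using xs(2) by (metis subsetI subset_antisym order_less_irrefl)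
    have "?R\<^sup>*\<^sup>* r v" using assms(2) r v unfolding induced_connected_def by blast
    from crossing[OF this xs(3) v(2)] obtain x y where xy: "?R x y" "x \<in> set xs" "y \<notin> set xs" by blast
    obtain j where j: "j < length xs" "xs!j = x" using xy(2) by (meson in_set_conv_nth)
    show ?case
    proof (rule exI[of _ "xs @ [y]"], intro conjI allI impI)
      fix i assume i: "0 < i \<and> i < length (xs @ [y])"
      show "\<exists>j<i. E ((xs @ [y]) ! i) ((xs @ [y]) ! j)"
      proof (cases "i < length xs")
        case True
        then obtain j' where "j' < i" "E (xs!i) (xs!j')" using xs(5) i by blast
        then show ?thesis using True by (intro exI[of _ j']) (auto simp: nth_append)
      next
        case False
        then have "i = length xs" using i by simp
        then show ?thesis using j xy assms(3) by (intro exI[of _ j]) (auto simp: nth_append)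
      qed
    qed (use xs(1-4) xy(1,3) in auto)
  qed
  have "card D \<noteq> 0" using r assms(1) by auto
  then obtain n where "Suc n = card D" by (cases "card D") auto
  then obtain xs where xs: "distinct xs" "set xs \<subseteq> D" "length xs = card D"
     "\<forall>i. 0<i \<and> i<length xs \<longrightarrow> (\<exists>j<i. E (xs!i) (xs!j))" using main[of n] by auto
  have "set xs = D" using card_subset_eq[OF assms(1) xs(2)] distinct_card[OF xs(1)] xs(3) by simp
  then show ?thesis using xs by blast
qed

lemma gs_tree:
  assumes "gs_ordering V E xs" "V \<noteq> {}"
  shows "rooted_spanning_tree V E (F_root xs) (F_parent E xs)"
proof -
  have d: "distinct xs" "set xs = V" and g: "\<And>i. 0 < i \<Longrightarrow> i < length xs \<Longrightarrow> \<exists>j < i. E (xs ! i) (xs ! j)"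
    using assms(1) unfolding gs_ordering_def by auto
  have ne: "xs \<noteq> []" using d assms(2) by auto
  have hd: "F_root xs = xs!0" unfolding F_root_def by (rule hd_conv_nth[OF ne])
  have par: "\<exists>l<i. F_parent E xs (xs!i) = xs!l \<and> E (xs!i) (xs!l)" if i0: "0<i" "i<length xs" for i
  proof -
    obtain j where j: "j<i" "E (xs ! i) (xs ! j)" using g[OF i0] by blast
    have "j < length xs" using j i0 by simp
    then obtain l where l: "l \<le> j" "F_parent E xs (xs!i) = xs!l" "E (xs!i) (xs!l)"
      using F_parent_idx[of j xs E "xs!i"] j(2) by blast
    have "l < i" using l(1) j(1) by simp
    then show ?thesis using l(2,3) by blast
  qed
  have reach: "\<exists>k. (F_parent E xs ^^ k) (xs!i) = F_root xs" if "i < length xs" for i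
    using that
  proof (induction i rule: less_induct)
    case (less i)
    show ?case
    proof (cases "i = 0")
      case True then show ?thesis using hd by (intro exI[of _ 0]) simp
    next
      case False
      then obtain l where l: "l<i" "F_parent E xs (xs!i) = xs!l" using par less.prems by blast
      then obtain k where "(F_parent E xs ^^ k) (xs!l) = F_root xs" using less by auto
      then show ?thesis using l by (intro exI[of _ "Suc k"]) (simp add: funpow_Suc_right del: funpow.simps)
    qed
  qed
  show ?thesis unfolding rooted_spanning_tree_def
  proof (intro conjI ballI)
    show "F_root xs \<in> V" using hd ne d by auto
  next
    fix v assume v: "v \<in> V - {F_root xs}"
    then obtain i where i: "i < length xs" "xs!i = v" using d by (metis DiffD1 in_set_conv_nth)
    have "0 < i" using i v hd by (cases "i = 0") auto
    then obtain l where "l<i" "F_parent E xs (xs!i) = xs!l" "E (xs!i) (xs!l)" using par i by blast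
    then show "F_parent E xs v \<in> V" "E v (F_parent E xs v)" using i d by auto
  next
    fix v assume "v \<in> V"
    then obtain i where i: "i < length xs" "xs!i = v" using d by (metis in_set_conv_nth)
    then show "\<exists>k. (F_parent E xs ^^ k) v = F_root xs" using reach by blast
  qed
qed

lemma tree_cds:
  assumes "rooted_spanning_tree V E r p" "\<forall>s \<in> S. tree_leaf V r p s" "S \<subseteq> V"
    "\<And>x y. E x y \<Longrightarrow> E y x"
  shows "connected_dominating_set V E (V - S)"
proof -
  let ?D = "V - S"
  let ?R = "\<lambda>x y. E x y \<and> x \<in> ?D \<and> y \<in> ?D"
  have rV: "r \<in> V" and pv: "\<And>v. v \<in> V - {r} \<Longrightarrow> p v \<in> V \<and> E v (p v)"
    and rc: "\<And>v. v \<in> V \<Longrightarrow> \<exists>k. (p ^^ k) v = r"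
    using assms(1) unfolding rooted_spanning_tree_def by auto
  have notS: "p v \<notin> S" if "v \<in> V - {r}" for v
    using assms(2) that unfolding tree_leaf_def by blast
  have rD: "r \<in> ?D" using rV assms(2) unfolding tree_leaf_def by auto
  have path: "\<forall>v. v \<in> ?D \<longrightarrow> (p ^^ k) v = r \<longrightarrow> ?R\<^sup>*\<^sup>* v r" for k
  proof (induction k)
    case 0 then show ?case by simp
  next
    case (Suc k)
    show ?case
    proof (intro allI impI)
      fix v assume v: "v \<in> ?D" "(p ^^ Suc k) v = r"
      show "?R\<^sup>*\<^sup>* v r"
      proof (cases "v = r")
        case True then show ?thesis by simp
      next
        case False
        then have pD: "p v \<in> ?D" and e: "E v (p v)" using pv notS v by auto
        have "(p ^^ k) (p v) = r" using v(2) by (simp add: funpow_Suc_right del: funpow.simps)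
        then have "?R\<^sup>*\<^sup>* (p v) r" using Suc.IH pD by blast
        moreover have "?R v (p v)" using e pD v(1) by blast
        ultimately show ?thesis by (rule converse_rtranclp_into_rtranclp[rotated])
      qed
    qed
  qed
  have toR: "?R\<^sup>*\<^sup>* v r" if "v \<in> ?D" for v using path rc that by blast
  have conn: "induced_connected E ?D" unfolding induced_connected_def
  proof (intro conjI ballI)
    show "?D \<noteq> {}" using rD by blast
  next
    fix u v assume "u \<in> ?D" "v \<in> ?D"
    moreover have "?R\<^sup>*\<^sup>* r v" using rtranclp_sym[of ?R v r] toR assms(4) calculation by blast
    ultimately show "?R\<^sup>*\<^sup>* u v" using toR by (meson rtranclp_trans)
  qed
  have dom: "\<forall>v \<in> V - ?D. \<exists>u \<in> ?D. E v u"
  proof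
    fix v assume v: "v \<in> V - ?D"
    then have "v \<in> S" by blast
    then have "v \<in> V - {r}" using assms(2) unfolding tree_leaf_def by auto
    then show "\<exists>u \<in> ?D. E v u" using pv notS by blast
  qed
  show ?thesis unfolding connected_dominating_set_def using conn dom by blast
qed

lemma cds_gs:
  assumes "connected_dominating_set V E (V - S)" "S \<subseteq> V" "simple_graph V E"
  shows "\<exists>xs. gs_ordering V E xs \<and> (\<forall>s \<in> S. tree_leaf V (F_root xs) (F_parent E xs) s)"
proof -
  let ?D = "V - S"
  have fin: "finite V" and sym: "\<And>x y. E x y \<Longrightarrow> E y x"
    using assms(3) unfolding simple_graph_def by auto
  have conn: "induced_connected E ?D" and dom: "\<forall>v \<in> S. \<exists>u \<in> ?D. E v u"
    using assms(1,2) unfolding connected_dominating_set_def by auto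
  obtain xs where xs: "distinct xs" "set xs = ?D"
     "\<forall>i. 0<i \<and> i<length xs \<longrightarrow> (\<exists>j<i. E (xs!i) (xs!j))"
    using gs_exists[where E=E, OF fin[THEN finite_subset[rotated]] conn sym] by blast
  have fS: "finite S" using fin assms(2) finite_subset by blast
  obtain ys where ys: "distinct ys" "set ys = S" using finite_distinct_list[OF fS] by blast
  let ?L = "xs @ ys"
  have ne: "xs \<noteq> []" using xs(2) conn unfolding induced_connected_def by auto
  have nb: "\<exists>j < length xs. j \<le> i \<and> (i > 0 \<longrightarrow> j < i) \<and> E (?L!i) (?L!j)" if i0: "i < length ?L" "0 < i" for i
  proof (cases "i < length xs")
    case True
    have "\<exists>j<i. E (xs!i) (xs!j)" using xs(3) True i0(2) by blast
    then obtain j where j: "j<i" "E (xs!i) (xs!j)" by blast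
    have "j < length xs" using j(1) True by simp
    moreover have "?L!i = xs!i" "?L!j = xs!j" using True j(1) by (auto simp: nth_append)
    ultimately show ?thesis using j by (intro exI[of _ j]) simp
  next
    case False
    then have "?L!i \<in> S" using i0 ys by (auto simp: nth_append)
    then obtain u where u: "u \<in> ?D" "E (?L!i) u" using dom by blast
    then obtain j where j: "j < length xs" "xs!j = u" using xs(2) by (metis in_set_conv_nth)
    then have "?L!j = u" by (simp add: nth_append)
    then show ?thesis using u False j by (intro exI[of _ j]) simp
  qed
  have gs: "gs_ordering V E ?L" unfolding gs_ordering_def
  proof (intro conjI allI impI)
    show "distinct ?L" using xs ys by auto
    show "set ?L = V" using xs ys assms(2) by auto
  next
    fix i assume "0 < i \<and> i < length ?L"
    then show "\<exists>j<i. E (?L!i) (?L!j)" using nb by blast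
  qed
  have "F_root ?L = hd xs" unfolding F_root_def using ne by simp
  then have root: "F_root ?L \<in> ?D" using hd_in_set[OF ne] xs(2) by simp
  have parD: "F_parent E ?L w \<in> ?D" if w: "w \<in> V - {F_root ?L}" for w
  proof -
    have "w \<in> set ?L" using w xs ys assms(2) by auto
    then obtain i where i: "i < length ?L" "?L!i = w" by (meson in_set_conv_nth)
    have h: "F_root ?L = ?L!0" unfolding F_root_def using ne by (intro hd_conv_nth) simp
    have "0 < i" using i w h by (cases "i = 0") auto
    then obtain j where j: "j < length xs" "E (?L!i) (?L!j)" using nb i(1) by blast
    have "j < length ?L" using j by simp
    then obtain l where l: "l \<le> j" "F_parent E ?L (?L!i) = ?L!l" using F_parent_idx[of j ?L E "?L!i"] j(2) by blast
    have "l < length xs" using l(1) j(1) by simp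
    then have "?L!l = xs!l" "xs!l \<in> set xs" by (auto simp: nth_append)
    then show ?thesis using l(2) i(2) xs(2) by simp
  qed
  have "\<forall>s \<in> S. tree_leaf V (F_root ?L) (F_parent E ?L) s"
    unfolding tree_leaf_def using parD root assms(2) by blast
  then show ?thesis using gs by blast
qed

theorem theorem3p5:
  fixes V :: "'a set" and E :: "'a \<Rightarrow> 'a \<Rightarrow> bool" and S :: "'a set"
  assumes "connected_graph V E" and "S \<subseteq> V"
  shows "((\<exists>xs. gs_ordering V E xs \<and>
             (\<forall>s \<in> S. tree_leaf V (F_root xs) (F_parent E xs) s))
          \<longleftrightarrow> (\<exists>r p. rooted_spanning_tree V E r p \<and> (\<forall>s \<in> S. tree_leaf V r p s)))
       \<and> ((\<exists>r p. rooted_spanning_tree V E r p \<and> (\<forall>s \<in> S. tree_leaf V r p s))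
          \<longleftrightarrow> connected_dominating_set V E (V - S))"
proof -
  have sg: "simple_graph V E" using assms(1) unfolding connected_graph_def by auto
  then have ne: "V \<noteq> {}" and sym: "\<And>x y. E x y \<Longrightarrow> E y x" unfolding simple_graph_def by auto
  have A: "(\<exists>xs. gs_ordering V E xs \<and> (\<forall>s \<in> S. tree_leaf V (F_root xs) (F_parent E xs) s))
     \<Longrightarrow> (\<exists>r p. rooted_spanning_tree V E r p \<and> (\<forall>s \<in> S. tree_leaf V r p s))"
    using gs_tree[OF _ ne] by blast
  have B: "(\<exists>r p. rooted_spanning_tree V E r p \<and> (\<forall>s \<in> S. tree_leaf V r p s))
     \<Longrightarrow> connected_dominating_set V E (V - S)"
    using tree_cds[where E=E, OF _ _ assms(2) sym] by blast
  have C: "connected_dominating_set V E (V - S) \<Longrightarrow>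
     (\<exists>xs. gs_ordering V E xs \<and> (\<forall>s \<in> S. tree_leaf V (F_root xs) (F_parent E xs) s))"
    using cds_gs[OF _ assms(2) sg] by blast
  show ?thesis using A B C by blast
qed

end
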